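(* Let $G$ be a finite simple graph and let $\{a,b\}$ be an edge of $G$. Then \[I(G)^{[2]}:ab = I(G-\{a,b\})+\big(cd \;:\; c\in N_G(a),\ d\in N_G(b),\ c\neq d,\ c,d\notin\{a,b\}\big).\] In particular, $I(G)^{[2]}:ab$ is the edge ideal of a graph.
   Context: $G$ is a finite simple graph on vertex set $\{x_1,\ldots,x_n\}$, identified with the variables of $S=K[x_1,\ldots,x_n]$ ($K$ a field); edges are identified with the corresponding degree-2 monomials. $I(G)$ is the edge ideal, generated by the monomials $x_ix_j$ with $\{x_i,x_j\}\in E(G)$. $I(G)^{[2]}$ is the ideal generated by all products $e_1e_2$ where $e_1,e_2$ are disjoint edges of $G$. $N_G(x)$ is the set of neighbours of $x$ in $G$. For $W\subseteq V(G)$, $G-W$ denotes the induced subgraph of $G$ on $V(G)\setminus W$. *)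

theory Defs
  imports "HOL-Library.Poly_Mapping"
begin

text \<open>Polynomial ring K[x_v : v in 'v]: finitely supported maps from monomials
  (finitely supported exponent vectors) to coefficients; multiplication is convolution.\<close>
type_synonym ('v, 'k) mpoly = "('v \<Rightarrow>\<^sub>0 nat) \<Rightarrow>\<^sub>0 'k"

definition var :: "'v \<Rightarrow> ('v, 'k::comm_ring_1) mpoly" where
  "var v = Poly_Mapping.single (Poly_Mapping.single v 1) 1"

definition ideal_gen :: "('v, 'k::comm_ring_1) mpoly set \<Rightarrow> ('v, 'k) mpoly set" where
  "ideal_gen S = {p. \<exists>F c. finite F \<and> F \<subseteq> S \<and> p = (\<Sum>f\<in>F. c f * f)}"

definition colon :: "('v, 'k::comm_ring_1) mpoly set \<Rightarrow> ('v, 'k) mpoly \<Rightarrow> ('v, 'k) mpoly set" where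
  "colon I f = {p. p * f \<in> I}"

definition simple_graph :: "'v set set \<Rightarrow> bool" where
  "simple_graph E \<longleftrightarrow> (\<forall>e\<in>E. card e = 2)"

definition edge_mon :: "'v set \<Rightarrow> ('v, 'k::comm_ring_1) mpoly" where
  "edge_mon e = (\<Prod>v\<in>e. var v)"

definition edge_ideal :: "'v set set \<Rightarrow> ('v, 'k::comm_ring_1) mpoly set" where
  "edge_ideal E = ideal_gen (edge_mon ` E)"

definition sq_edge_ideal :: "'v set set \<Rightarrow> ('v, 'k::comm_ring_1) mpoly set" where
  "sq_edge_ideal E = ideal_gen {edge_mon e1 * edge_mon e2 | e1 e2. e1 \<in> E \<and> e2 \<in> E \<and> e1 \<inter> e2 = {}}"

definition nbrs :: "'v set set \<Rightarrow> 'v \<Rightarrow> 'v set" where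
  "nbrs E x = {y. {x, y} \<in> E}"

definition del_vertices :: "'v set set \<Rightarrow> 'v set \<Rightarrow> 'v set set" where
  "del_vertices E W = {e \<in> E. e \<inter> W = {}}"

end

theory Submission imports Defs begin

lemma ideal_gen_0: "0 \<in> ideal_gen S"
  unfolding ideal_gen_def by (rule CollectI, rule exI[of _ "{}"]) auto

lemma ideal_gen_add: assumes "p \<in> ideal_gen S" "q \<in> ideal_gen S" shows "p + q \<in> ideal_gen S"
proof -
  obtain F c where F: "finite F" "F \<subseteq> S" "p = (\<Sum>f\<in>F. c f * f)" using assms(1) unfolding ideal_gen_def by blast
  obtain G d where G: "finite G" "G \<subseteq> S" "q = (\<Sum>f\<in>G. d f * f)" using assms(2) unfolding ideal_gen_def by blast
  define e where "e f = (if f \<in> F then c f else 0) + (if f \<in> G then d f else 0)" for f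
  have "(\<Sum>f\<in>F \<union> G. e f * f) = (\<Sum>f\<in>F \<union> G. (if f \<in> F then c f * f else 0)) + (\<Sum>f\<in>F \<union> G. (if f \<in> G then d f * f else 0))"
    unfolding e_def sum.distrib[symmetric] by (rule sum.cong) (auto simp: distrib_right)
  also have "\<dots> = p + q"
    using F G by (simp add: sum.If_cases Int_absorb1)
  finally have "p + q = (\<Sum>f\<in>F \<union> G. e f * f)" by simp
  then show ?thesis unfolding ideal_gen_def using F G by blast
qed

lemma ideal_gen_mult: assumes "p \<in> ideal_gen S" shows "r * p \<in> ideal_gen S"
proof -
  obtain F c where F: "finite F" "F \<subseteq> S" "p = (\<Sum>f\<in>F. c f * f)" using assms(1) unfolding ideal_gen_def by blast
  have "r * p = (\<Sum>f\<in>F. (r * c f) * f)" using F by (simp add: sum_distrib_left mult.assoc)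
  then show ?thesis unfolding ideal_gen_def using F
    by (intro CollectI exI[of _ F] exI[of _ "\<lambda>f. r * c f"]) simp
qed

lemma ideal_gen_gen: assumes "g \<in> S" shows "g \<in> ideal_gen S"
  unfolding ideal_gen_def using assms by (intro CollectI exI[of _ "{g}"] exI[of _ "\<lambda>_. 1"]) simp

lemma ideal_gen_sum: assumes "finite A" "\<And>x. x \<in> A \<Longrightarrow> f x \<in> ideal_gen S" shows "sum f A \<in> ideal_gen S"
  using assms by (induction A rule: finite_induct) (auto intro: ideal_gen_0 ideal_gen_add)

definition le_pm :: "('v \<Rightarrow>\<^sub>0 nat) \<Rightarrow> ('v \<Rightarrow>\<^sub>0 nat) \<Rightarrow> bool" where
  "le_pm g t \<longleftrightarrow> (\<forall>v. Poly_Mapping.lookup g v \<le> Poly_Mapping.lookup t v)"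

lemma monomial_decomp: "p = (\<Sum>t\<in>Poly_Mapping.keys p. Poly_Mapping.single t (Poly_Mapping.lookup p t))"
proof (rule poly_mapping_eqI)
  fix k
  show "Poly_Mapping.lookup p k = Poly_Mapping.lookup (\<Sum>t\<in>Poly_Mapping.keys p. Poly_Mapping.single t (Poly_Mapping.lookup p t)) k"
    by (simp add: lookup_sum lookup_single when_def in_keys_iff)
qed

lemma mon_char:
  "ideal_gen ((\<lambda>g. Poly_Mapping.single g (1::'k::comm_ring_1)) ` G) = {p. \<forall>t\<in>Poly_Mapping.keys p. \<exists>g\<in>G. le_pm g t}"
proof (intro set_eqI iffI; clarsimp)
  fix p :: "('a, 'k) mpoly" and t
  assume "p \<in> ideal_gen ((\<lambda>g. Poly_Mapping.single g 1) ` G)" "t \<in> Poly_Mapping.keys p"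
  then obtain F c where F: "finite F" "F \<subseteq> (\<lambda>g. Poly_Mapping.single g 1) ` G" "p = (\<Sum>f\<in>F. c f * f)"
    unfolding ideal_gen_def by blast
  have ks: "Poly_Mapping.keys p \<subseteq> (\<Union>f\<in>F. Poly_Mapping.keys (c f * f))" unfolding F(3) by (rule keys_sum)
  have "t \<in> (\<Union>f\<in>F. Poly_Mapping.keys (c f * f))" using ks \<open>t \<in> _\<close> by (rule subsetD)
  then obtain f where f: "f \<in> F" "t \<in> Poly_Mapping.keys (c f * f)" by blast
  obtain g where g: "g \<in> G" "f = Poly_Mapping.single g 1" using F(2) f(1) by blast
  have "t \<in> {a + b |a b. a \<in> Poly_Mapping.keys (c f) \<and> b \<in> Poly_Mapping.keys f}" using keys_mult f(2) by (rule subsetD)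
  then obtain s b where "t = s + b" "b \<in> Poly_Mapping.keys f" by blast
  then have "t = s + g" using g(2) by simp
  then have "le_pm g t" by (simp add: le_pm_def lookup_add)
  then show "\<exists>g\<in>G. le_pm g t" using g by blast
next
  fix p :: "('a, 'k) mpoly"
  assume H: "\<forall>t\<in>Poly_Mapping.keys p. \<exists>g\<in>G. le_pm g t"
  have "(\<Sum>t\<in>Poly_Mapping.keys p. Poly_Mapping.single t (Poly_Mapping.lookup p t)) \<in> ideal_gen ((\<lambda>g. Poly_Mapping.single g 1) ` G)"
  proof (rule ideal_gen_sum, simp)
    fix t assume "t \<in> Poly_Mapping.keys p"
    then obtain g where g: "g \<in> G" "le_pm g t" using H by blast
    have "t = (t - g) + g"
      by (rule poly_mapping_eqI) (use g(2) in \<open>simp add: le_pm_def lookup_add lookup_minus\<close>)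
    then have "Poly_Mapping.single t (Poly_Mapping.lookup p t) = Poly_Mapping.single (t - g) (Poly_Mapping.lookup p t) * Poly_Mapping.single g (1::'k)"
      by (simp add: mult_single)
    then show "Poly_Mapping.single t (Poly_Mapping.lookup p t) \<in> ideal_gen ((\<lambda>g. Poly_Mapping.single g 1) ` G)"
      using g by (simp add: ideal_gen_mult ideal_gen_gen)
  qed
  then show "p \<in> ideal_gen ((\<lambda>g. Poly_Mapping.single g 1) ` G)" using monomial_decomp[of p] by simp
qed

lemma lookup_mult_single: "Poly_Mapping.lookup ((p::('v,'k) mpoly) * Poly_Mapping.single m (1::'k::comm_ring_1)) (t + m) = Poly_Mapping.lookup p t"
proof -
  have "Poly_Mapping.lookup (Poly_Mapping.single m 1 * p) (t + m) = Poly_Mapping.lookup p t"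
  proof -
    have e1: "(m + t = a + m) = (t = a)" for a by (subst add.commute[of a m]) simp
    have e2: "(t + m = m + a) = (t = a)" for a by (subst add.commute[of t m]) simp
    note e = e1 e2
    show ?thesis unfolding lookup_mult lookup_single by (simp add: when_mult e)
  qed
  then show ?thesis by (simp add: mult.commute)
qed

lemma keys_mult_single: "Poly_Mapping.keys ((p::('v,'k) mpoly) * Poly_Mapping.single m (1::'k::comm_ring_1)) = (\<lambda>t. t + m) ` Poly_Mapping.keys p"
proof
  show "Poly_Mapping.keys (p * Poly_Mapping.single m 1) \<subseteq> (\<lambda>t. t + m) ` Poly_Mapping.keys p"
    using keys_mult[of p "Poly_Mapping.single m (1::'k)"] by auto
  show "(\<lambda>t. t + m) ` Poly_Mapping.keys p \<subseteq> Poly_Mapping.keys (p * Poly_Mapping.single m 1)"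
    by (auto simp: in_keys_iff lookup_mult_single)
qed


definition dd :: "'v \<Rightarrow> 'v \<Rightarrow> ('v \<Rightarrow>\<^sub>0 nat)" where
  "dd x y = Poly_Mapping.single x 1 + Poly_Mapping.single y 1"

lemma var_mult: "var x * var y = Poly_Mapping.single (dd x y) (1::'k::comm_ring_1)"
  unfolding var_def dd_def by (simp add: mult_single)

lemma edge_mon_pair: "x \<noteq> y \<Longrightarrow> edge_mon {x, y} = (Poly_Mapping.single (dd x y) (1::'k::comm_ring_1))"
  unfolding edge_mon_def by (simp add: var_mult)

lemma lookup_dd: "Poly_Mapping.lookup (dd x y) v = (if v = x then 1 else 0) + (if v = y then 1 else 0)"
  unfolding dd_def by (simp add: lookup_add lookup_single when_def eq_commute)

lemma le_dd: assumes "x \<noteq> y" shows "le_pm (dd x y) t \<longleftrightarrow> 1 \<le> Poly_Mapping.lookup t x \<and> 1 \<le> Poly_Mapping.lookup t y"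
  unfolding le_pm_def lookup_dd
proof
  assume H: "\<forall>v. (if v = x then 1 else 0) + (if v = y then 1 else 0) \<le> Poly_Mapping.lookup t v"
  show "1 \<le> Poly_Mapping.lookup t x \<and> 1 \<le> Poly_Mapping.lookup t y"
    using spec[OF H, of x] spec[OF H, of y] assms by simp
next
  assume "1 \<le> Poly_Mapping.lookup t x \<and> 1 \<le> Poly_Mapping.lookup t y"
  then show "\<forall>v. (if v = x then 1 else 0) + (if v = y then 1 else 0) \<le> Poly_Mapping.lookup t v"
    using assms by auto
qed

lemma le_dd2: assumes "distinct [x1, y1, x2, y2]" shows "le_pm (dd x1 y1 + dd x2 y2) t \<longleftrightarrow>
   1 \<le> Poly_Mapping.lookup t x1 \<and> 1 \<le> Poly_Mapping.lookup t y1 \<and> 1 \<le> Poly_Mapping.lookup t x2 \<and> 1 \<le> Poly_Mapping.lookup t y2"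
  unfolding le_pm_def lookup_dd lookup_add
proof
  assume H: "\<forall>v. (if v = x1 then 1 else 0) + (if v = y1 then 1 else 0) + ((if v = x2 then 1 else 0) + (if v = y2 then 1 else 0)) \<le> Poly_Mapping.lookup t v"
  show "1 \<le> Poly_Mapping.lookup t x1 \<and> 1 \<le> Poly_Mapping.lookup t y1 \<and> 1 \<le> Poly_Mapping.lookup t x2 \<and> 1 \<le> Poly_Mapping.lookup t y2"
    using spec[OF H, of x1] spec[OF H, of y1] spec[OF H, of x2] spec[OF H, of y2] assms by simp
next
  assume "1 \<le> Poly_Mapping.lookup t x1 \<and> 1 \<le> Poly_Mapping.lookup t y1 \<and> 1 \<le> Poly_Mapping.lookup t x2 \<and> 1 \<le> Poly_Mapping.lookup t y2"
  then show "\<forall>v. (if v = x1 then 1 else 0) + (if v = y1 then 1 else 0) + ((if v = x2 then 1 else 0) + (if v = y2 then 1 else 0)) \<le> Poly_Mapping.lookup t v"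
    using assms by auto
qed

lemma lookup_t_dd: "Poly_Mapping.lookup (t + dd a b) v = Poly_Mapping.lookup t v + (if v = a then 1 else 0) + (if v = b then 1 else 0)"
  by (simp add: lookup_add lookup_dd)

lemma sg_edge: "simple_graph E \<Longrightarrow> e \<in> E \<Longrightarrow> \<exists>x y. x \<noteq> y \<and> e = {x, y}"
proof -
  assume "simple_graph E" "e \<in> E"
  then have "card e = 2" unfolding simple_graph_def by blast
  then obtain x y where "e = {x, y}" "x \<noteq> y" unfolding card_2_iff by blast
  then show ?thesis by blast
qed

definition G1 :: "'v set set \<Rightarrow> ('v \<Rightarrow>\<^sub>0 nat) set" where
  "G1 E = {dd x1 y1 + dd x2 y2 | x1 y1 x2 y2. {x1,y1} \<in> E \<and> {x2,y2} \<in> E \<and> x1 \<noteq> y1 \<and> x2 \<noteq> y2 \<and> {x1,y1} \<inter> {x2,y2} = {}}"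

definition G2 :: "'v set set \<Rightarrow> 'v \<Rightarrow> 'v \<Rightarrow> ('v \<Rightarrow>\<^sub>0 nat) set" where
  "G2 E a b = {dd x y | x y. {x,y} \<in> E \<and> x \<noteq> y \<and> {x,y} \<inter> {a,b} = {}} \<union>
     {dd c d | c d. c \<in> nbrs E a \<and> d \<in> nbrs E b \<and> c \<noteq> d \<and> c \<notin> {a, b} \<and> d \<notin> {a, b}}"

lemma G1I: "{x1,y1} \<in> E \<Longrightarrow> {x2,y2} \<in> E \<Longrightarrow> x1 \<noteq> y1 \<Longrightarrow> x2 \<noteq> y2 \<Longrightarrow> {x1,y1} \<inter> {x2,y2} = {} \<Longrightarrow> dd x1 y1 + dd x2 y2 \<in> G1 E"
  unfolding G1_def by blast

lemma gen1: fixes E :: "'v set set" assumes "simple_graph E"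
  shows "{edge_mon e1 * edge_mon e2 | e1 e2. e1 \<in> E \<and> e2 \<in> E \<and> e1 \<inter> e2 = {}} = (\<lambda>g. Poly_Mapping.single g (1::'k::comm_ring_1)) ` G1 E"
proof (intro set_eqI iffI)
  fix z :: "('v,'k) mpoly"
  assume "z \<in> {edge_mon e1 * edge_mon e2 | e1 e2. e1 \<in> E \<and> e2 \<in> E \<and> e1 \<inter> e2 = {}}"
  then obtain e1 e2 where e: "z = edge_mon e1 * edge_mon e2" "e1 \<in> E" "e2 \<in> E" "e1 \<inter> e2 = {}" by blast
  obtain x1 y1 where 1: "x1 \<noteq> y1" "e1 = {x1, y1}" using sg_edge[OF assms e(2)] by blast
  obtain x2 y2 where 2: "x2 \<noteq> y2" "e2 = {x2, y2}" using sg_edge[OF assms e(3)] by blast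
  have "z = Poly_Mapping.single (dd x1 y1 + dd x2 y2) 1" using e 1 2 by (simp add: edge_mon_pair mult_single)
  moreover have "dd x1 y1 + dd x2 y2 \<in> G1 E" unfolding G1_def using e 1 2 by blast
  ultimately show "z \<in> (\<lambda>g. Poly_Mapping.single g 1) ` G1 E" by blast
next
  fix z :: "('v,'k) mpoly"
  assume "z \<in> (\<lambda>g. Poly_Mapping.single g 1) ` G1 E"
  then obtain x1 y1 x2 y2 where h: "z = Poly_Mapping.single (dd x1 y1 + dd x2 y2) 1" "{x1,y1} \<in> E" "{x2,y2} \<in> E" "x1 \<noteq> y1" "x2 \<noteq> y2" "{x1,y1} \<inter> {x2,y2} = {}"
    unfolding G1_def by blast
  have "z = edge_mon {x1,y1} * edge_mon {x2,y2}" using h by (simp add: edge_mon_pair mult_single)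
  then show "z \<in> {edge_mon e1 * edge_mon e2 | e1 e2. e1 \<in> E \<and> e2 \<in> E \<and> e1 \<inter> e2 = {}}" using h by blast
qed

lemma gen2: fixes E :: "'v set set" assumes "simple_graph E"
  shows "edge_mon ` del_vertices E {a, b} \<union>
             {var c * var d | c d. c \<in> nbrs E a \<and> d \<in> nbrs E b \<and> c \<noteq> d \<and>
                c \<notin> {a, b} \<and> d \<notin> {a, b}} = (\<lambda>g. Poly_Mapping.single g (1::'k::comm_ring_1)) ` G2 E a b"
proof (intro set_eqI iffI)
  fix z :: "('v,'k) mpoly"
  assume "z \<in> edge_mon ` del_vertices E {a, b} \<union>
             {var c * var d | c d. c \<in> nbrs E a \<and> d \<in> nbrs E b \<and> c \<noteq> d \<and>
                c \<notin> {a, b} \<and> d \<notin> {a, b}}"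
  then show "z \<in> (\<lambda>g. Poly_Mapping.single g 1) ` G2 E a b"
  proof
    assume "z \<in> edge_mon ` del_vertices E {a, b}"
    then obtain e where e: "z = edge_mon e" "e \<in> E" "e \<inter> {a,b} = {}" unfolding del_vertices_def by blast
    obtain x y where 1: "x \<noteq> y" "e = {x, y}" using sg_edge[OF assms e(2)] by blast
    have "z = Poly_Mapping.single (dd x y) 1" using e 1 by (simp add: edge_mon_pair)
    moreover have "dd x y \<in> G2 E a b" unfolding G2_def using e 1 by blast
    ultimately show ?thesis by blast
  next
    assume "z \<in> {var c * var d | c d. c \<in> nbrs E a \<and> d \<in> nbrs E b \<and> c \<noteq> d \<and> c \<notin> {a, b} \<and> d \<notin> {a, b}}"
    then obtain c d where h: "z = var c * var d" "c \<in> nbrs E a" "d \<in> nbrs E b" "c \<noteq> d" "c \<notin> {a, b}" "d \<notin> {a, b}" by blast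
    have "z = Poly_Mapping.single (dd c d) 1" using h by (simp add: var_mult)
    moreover have "dd c d \<in> G2 E a b" unfolding G2_def using h by blast
    ultimately show ?thesis by blast
  qed
next
  fix z :: "('v,'k) mpoly"
  assume "z \<in> (\<lambda>g. Poly_Mapping.single g 1) ` G2 E a b"
  then obtain g where g: "z = Poly_Mapping.single g 1" "g \<in> G2 E a b" by blast
  from g(2) show "z \<in> edge_mon ` del_vertices E {a, b} \<union>
             {var c * var d | c d. c \<in> nbrs E a \<and> d \<in> nbrs E b \<and> c \<noteq> d \<and>
                c \<notin> {a, b} \<and> d \<notin> {a, b}}"
    unfolding G2_def
  proof
    assume "g \<in> {dd x y | x y. {x,y} \<in> E \<and> x \<noteq> y \<and> {x,y} \<inter> {a,b} = {}}"
    then obtain x y where h: "g = dd x y" "{x,y} \<in> E" "x \<noteq> y" "{x,y} \<inter> {a,b} = {}" by blast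
    have "z = edge_mon {x,y}" using g h by (simp add: edge_mon_pair)
    moreover have "{x,y} \<in> del_vertices E {a,b}" unfolding del_vertices_def using h by blast
    ultimately show ?thesis by blast
  next
    assume "g \<in> {dd c d | c d. c \<in> nbrs E a \<and> d \<in> nbrs E b \<and> c \<noteq> d \<and> c \<notin> {a, b} \<and> d \<notin> {a, b}}"
    then obtain c d where h: "g = dd c d" "c \<in> nbrs E a" "d \<in> nbrs E b" "c \<noteq> d" "c \<notin> {a, b}" "d \<notin> {a, b}" by blast
    have "z = var c * var d" using g h by (simp add: var_mult)
    then show ?thesis using h by blast
  qed
qed


lemma comb_aux:
  fixes T :: "'v \<Rightarrow> nat"
  assumes "u \<in> {a,b}" "w \<in> {a,b}" "{u,c} \<in> E" "{w,d} \<in> E" "distinct [u,c,w,d]"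
    "1 \<le> T c + (if c = a then 1 else 0) + (if c = b then 1 else 0)"
    "1 \<le> T d + (if d = a then 1 else 0) + (if d = b then 1 else 0)"
  shows "\<exists>c d. c \<in> nbrs E a \<and> d \<in> nbrs E b \<and> c \<noteq> d \<and> c \<notin> {a, b} \<and> d \<notin> {a, b} \<and> 1 \<le> T c \<and> 1 \<le> T d"
proof -
  have cd: "c \<notin> {a,b}" "d \<notin> {a,b}" using assms(1,2,5) by auto
  then have T: "1 \<le> T c" "1 \<le> T d" using assms(6,7) by auto
  show ?thesis
  proof (cases "u = a")
    case True
    then have "w = b" using assms(1,2,5) by auto
    then show ?thesis using True assms cd T unfolding nbrs_def by auto
  next
    case False
    then have "u = b" "w = a" using assms(1,2,5) by auto
    then show ?thesis using assms cd T unfolding nbrs_def by auto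
  qed
qed

lemma comb:
  fixes E :: "'v set set"
  assumes "{a,b} \<in> E" "a \<noteq> b"
  shows "(\<exists>g\<in>G1 E. le_pm g (t + dd a b)) \<longleftrightarrow> (\<exists>g\<in>G2 E a b. le_pm g t)"
proof
  assume "\<exists>g\<in>G1 E. le_pm g (t + dd a b)"
  then obtain x1 y1 x2 y2 where h: "le_pm (dd x1 y1 + dd x2 y2) (t + dd a b)" "{x1,y1} \<in> E" "{x2,y2} \<in> E" "x1 \<noteq> y1" "x2 \<noteq> y2" "{x1,y1} \<inter> {x2,y2} = {}"
    unfolding G1_def by blast
  have dist: "distinct [x1,y1,x2,y2]" using h(4-6) by auto
  define T where "T = Poly_Mapping.lookup t"
  have L: "1 \<le> T v + (if v = a then 1 else 0) + (if v = b then 1 else 0)" if "v \<in> {x1,y1,x2,y2}" for v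
    using h(1) that unfolding le_dd2[OF dist] lookup_t_dd T_def by auto
  show "\<exists>g\<in>G2 E a b. le_pm g t"
  proof (cases "{x1,y1} \<inter> {a,b} = {}")
    case True
    then have "dd x1 y1 \<in> G2 E a b" unfolding G2_def using h by blast
    moreover have "le_pm (dd x1 y1) t" using L[of x1] L[of y1] True h(4) by (auto simp: le_dd T_def)
    ultimately show ?thesis by blast
  next
    case F1: False
    show ?thesis
    proof (cases "{x2,y2} \<inter> {a,b} = {}")
      case True
      then have "dd x2 y2 \<in> G2 E a b" unfolding G2_def using h by blast
      moreover have "le_pm (dd x2 y2) t" using L[of x2] L[of y2] True h(5) by (auto simp: le_dd T_def)
      ultimately show ?thesis by blast
    next
      case F2: False
      have "\<exists>c d. c \<in> nbrs E a \<and> d \<in> nbrs E b \<and> c \<noteq> d \<and> c \<notin> {a, b} \<and> d \<notin> {a, b} \<and> 1 \<le> T c \<and> 1 \<le> T d"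
      proof -
        obtain u c where uc: "u \<in> {a,b}" "{u,c} = {x1,y1}" "(u = x1 \<and> c = y1) \<or> (u = y1 \<and> c = x1)" using F1 by blast
        obtain w d where wd: "w \<in> {a,b}" "{w,d} = {x2,y2}" "(w = x2 \<and> d = y2) \<or> (w = y2 \<and> d = x2)" using F2 by blast
        have d1: "distinct [u,c,w,d]" using dist uc(3) wd(3) by auto
        have i1: "c \<in> {x1,y1,x2,y2}" "d \<in> {x1,y1,x2,y2}" using uc(3) wd(3) by auto
        have e1: "{u,c} \<in> E" using uc(2) h(2) by simp
        have e2: "{w,d} \<in> E" using wd(2) h(3) by simp
        show ?thesis by (rule comb_aux[OF uc(1) wd(1) e1 e2 d1 L[OF i1(1)] L[OF i1(2)]])
      qed
      then obtain c d where cd: "c \<in> nbrs E a" "d \<in> nbrs E b" "c \<noteq> d" "c \<notin> {a, b}" "d \<notin> {a, b}" "1 \<le> T c" "1 \<le> T d" by blast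
      then have "dd c d \<in> G2 E a b" unfolding G2_def by blast
      moreover have "le_pm (dd c d) t" using cd(6,7) unfolding le_dd[OF cd(3)] T_def by simp
      ultimately show ?thesis by blast
    qed
  qed
next
  assume "\<exists>g\<in>G2 E a b. le_pm g t"
  then obtain g where g: "g \<in> G2 E a b" "le_pm g t" by blast
  from g(1) show "\<exists>g\<in>G1 E. le_pm g (t + dd a b)" unfolding G2_def
  proof
    assume "g \<in> {dd x y | x y. {x,y} \<in> E \<and> x \<noteq> y \<and> {x,y} \<inter> {a,b} = {}}"
    then obtain x y where h: "g = dd x y" "{x,y} \<in> E" "x \<noteq> y" "{x,y} \<inter> {a,b} = {}" by blast
    have dist: "distinct [x,y,a,b]" using h assms by auto
    have "dd x y + dd a b \<in> G1 E" by (rule G1I[OF h(2) assms(1) h(3) assms(2) h(4)])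
    moreover have "le_pm (dd x y + dd a b) (t + dd a b)"
    proof -
      have "1 \<le> Poly_Mapping.lookup t x" "1 \<le> Poly_Mapping.lookup t y" using g(2) unfolding h(1) le_dd[OF h(3)] by auto
      then show ?thesis unfolding le_dd2[OF dist] lookup_t_dd by simp
    qed
    ultimately show ?thesis by blast
  next
    assume "g \<in> {dd c d | c d. c \<in> nbrs E a \<and> d \<in> nbrs E b \<and> c \<noteq> d \<and> c \<notin> {a, b} \<and> d \<notin> {a, b}}"
    then obtain c d where h: "g = dd c d" "c \<in> nbrs E a" "d \<in> nbrs E b" "c \<noteq> d" "c \<notin> {a, b}" "d \<notin> {a, b}" by blast
    have dist: "distinct [a,c,b,d]" using h(4,5,6) assms(2) by auto
    have "{a,c} \<in> E" "{b,d} \<in> E" using h(2,3) unfolding nbrs_def by simp_all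
    moreover have "{a,c} \<inter> {b,d} = {}" "a \<noteq> c" "b \<noteq> d" using h(4,5,6) assms(2) by auto
    ultimately have "dd a c + dd b d \<in> G1 E" by (intro G1I)
    moreover have "le_pm (dd a c + dd b d) (t + dd a b)"
    proof -
      have "1 \<le> Poly_Mapping.lookup t c" "1 \<le> Poly_Mapping.lookup t d" using g(2) unfolding h(1) le_dd[OF h(4)] by auto
      then show ?thesis unfolding le_dd2[OF dist] lookup_t_dd by simp
    qed
    ultimately show ?thesis by blast
  qed
qed

theorem lemma2p5:
  fixes E :: "('v::finite) set set" and a b :: 'v
  assumes "simple_graph E" and "{a, b} \<in> E"
  shows "colon (sq_edge_ideal E :: ('v, 'k::field) mpoly set) (var a * var b) =
           ideal_gen (edge_mon ` del_vertices E {a, b} \<union>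
             {var c * var d | c d. c \<in> nbrs E a \<and> d \<in> nbrs E b \<and> c \<noteq> d \<and>
                c \<notin> {a, b} \<and> d \<notin> {a, b}})
       \<and> (\<exists>E'. simple_graph E' \<and>
            colon (sq_edge_ideal E :: ('v, 'k) mpoly set) (var a * var b) = edge_ideal E')"
proof -
  have ab: "a \<noteq> b" using assms unfolding simple_graph_def by fastforce
  have eq: "colon (sq_edge_ideal E :: ('v, 'k) mpoly set) (var a * var b) =
           ideal_gen (edge_mon ` del_vertices E {a, b} \<union>
             {var c * var d | c d. c \<in> nbrs E a \<and> d \<in> nbrs E b \<and> c \<noteq> d \<and>
                c \<notin> {a, b} \<and> d \<notin> {a, b}})"
  proof -
    have "colon (sq_edge_ideal E :: ('v, 'k) mpoly set) (var a * var b) =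
          {p. \<forall>t\<in>Poly_Mapping.keys p. \<exists>g\<in>G1 E. le_pm g (t + dd a b)}"
      unfolding colon_def sq_edge_ideal_def gen1[OF assms(1)] mon_char var_mult
      by (auto simp: keys_mult_single)
    also have "\<dots> = {p. \<forall>t\<in>Poly_Mapping.keys p. \<exists>g\<in>G2 E a b. le_pm g t}"
      using comb[OF assms(2) ab] by blast
    also have "\<dots> = ideal_gen ((\<lambda>g. Poly_Mapping.single g (1::'k)) ` G2 E a b)"
      by (rule mon_char[symmetric])
    finally show ?thesis unfolding gen2[OF assms(1)] .
  qed
  define E' where "E' = del_vertices E {a, b} \<union> {{c, d} | c d. c \<in> nbrs E a \<and> d \<in> nbrs E b \<and> c \<noteq> d \<and>
                c \<notin> {a, b} \<and> d \<notin> {a, b}}"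
  have sg: "simple_graph E'"
    unfolding simple_graph_def
  proof
    fix e assume "e \<in> E'"
    then consider "e \<in> E" | c d where "e = {c, d}" "c \<noteq> d" unfolding E'_def del_vertices_def by blast
    then show "card e = 2"
    proof cases
      case 1 then show ?thesis using assms(1) unfolding simple_graph_def by blast
    next
      case 2 then show ?thesis by simp
    qed
  qed
  have "(edge_mon ` E' :: ('v,'k) mpoly set) = edge_mon ` del_vertices E {a, b} \<union>
             {var c * var d | c d. c \<in> nbrs E a \<and> d \<in> nbrs E b \<and> c \<noteq> d \<and>
                c \<notin> {a, b} \<and> d \<notin> {a, b}}"
  proof -
    have "edge_mon ` {{c, d} | c d. c \<in> nbrs E a \<and> d \<in> nbrs E b \<and> c \<noteq> d \<and> c \<notin> {a, b} \<and> d \<notin> {a, b}}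
      = ({var c * var d | c d. c \<in> nbrs E a \<and> d \<in> nbrs E b \<and> c \<noteq> d \<and>
                c \<notin> {a, b} \<and> d \<notin> {a, b}} :: ('v,'k) mpoly set)"
    proof (intro set_eqI iffI)
      fix z :: "('v,'k) mpoly"
      assume "z \<in> edge_mon ` {{c, d} | c d. c \<in> nbrs E a \<and> d \<in> nbrs E b \<and> c \<noteq> d \<and> c \<notin> {a, b} \<and> d \<notin> {a, b}}"
      then obtain c d where h: "z = edge_mon {c,d}" "c \<in> nbrs E a" "d \<in> nbrs E b" "c \<noteq> d" "c \<notin> {a, b}" "d \<notin> {a, b}" by blast
      then have "z = var c * var d" by (simp add: edge_mon_def)
      then show "z \<in> {var c * var d | c d. c \<in> nbrs E a \<and> d \<in> nbrs E b \<and> c \<noteq> d \<and> c \<notin> {a, b} \<and> d \<notin> {a, b}}" using h by blast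
    next
      fix z :: "('v,'k) mpoly"
      assume "z \<in> {var c * var d | c d. c \<in> nbrs E a \<and> d \<in> nbrs E b \<and> c \<noteq> d \<and> c \<notin> {a, b} \<and> d \<notin> {a, b}}"
      then obtain c d where h: "z = var c * var d" "c \<in> nbrs E a" "d \<in> nbrs E b" "c \<noteq> d" "c \<notin> {a, b}" "d \<notin> {a, b}" by blast
      then have "z = edge_mon {c,d}" by (simp add: edge_mon_def)
      then show "z \<in> edge_mon ` {{c, d} | c d. c \<in> nbrs E a \<and> d \<in> nbrs E b \<and> c \<noteq> d \<and> c \<notin> {a, b} \<and> d \<notin> {a, b}}" using h by blast
    qed
    then show ?thesis unfolding E'_def image_Un by simp
  qed
  then have "colon (sq_edge_ideal E :: ('v, 'k) mpoly set) (var a * var b) = edge_ideal E'"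
    unfolding edge_ideal_def eq by simp
  then show ?thesis using eq sg by blast
qed

end
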